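(* Let $n$ be odd and, with $\Gamma_i$ the irreducible character of $S_n$ labelled by the hook partition $[i,1^{n-i}]$ ($\Gamma_1$ corresponding to $[1^n]$), set $\Gamma^e=\Gamma_2+\Gamma_4+\cdots+\Gamma_{n-1}$ and $\Gamma^o=\Gamma_1+\Gamma_3+\cdots+\Gamma_n$. Then (a) $\Gamma^e$ and $\Gamma^o$ vanish on all elements of $S_n$ of even order; (b) $\Gamma^e$ is Steinberg-like for $p=2$ (i.e. additionally $\Gamma^e(1)=|S_n|_2$) if and only if $n=2^k+1$ for some integer $k>0$.
   Context: $|S_n|_2$ denotes the $2$-part of $n!$. A character is Steinberg-like for $p=2$ if it vanishes on all elements of even order and its degree equals the order of a Sylow $2$-subgroup. *)

theory Defs
  imports "HOL-Combinatorics.Permutations" "HOL-Library.FuncSet" "HOL-Computational_Algebra.Primes"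
begin

definition perm_order :: "(nat \<Rightarrow> nat) \<Rightarrow> nat" where
  "perm_order \<sigma> = (LEAST k. 0 < k \<and> (\<sigma> ^^ k) = id)"

text \<open>Irreducible character of S_n labelled by the partition lam (given as a
  zero-padded function, lam 0 \<ge> lam 1 \<ge> ...), via the Frobenius character formula:
  chi^lam(sigma) = coefficient of x^(lam+delta) in a_delta * p_(cycle type of sigma),
  with n variables, delta_i = n-1-i.  The coefficient of x^beta in p_rho is the number
  of sigma-invariant colourings f of {..<n} with colour class sizes beta.\<close>
definition frob_char :: "nat \<Rightarrow> (nat \<Rightarrow> nat) \<Rightarrow> (nat \<Rightarrow> nat) \<Rightarrow> int" where
  "frob_char n lam \<sigma> =
     (\<Sum>\<pi> | \<pi> permutes {..<n}. sign \<pi> *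
        int (card {f \<in> {..<n} \<rightarrow>\<^sub>E {..<n}.
                 (\<forall>x<n. f (\<sigma> x) = f x) \<and>
                 (\<forall>i<n. int (card {x. x < n \<and> f x = i})
                        = int (lam i) + int (n - 1 - i) - int (n - 1 - \<pi> i))}))"

definition hook :: "nat \<Rightarrow> nat \<Rightarrow> nat \<Rightarrow> nat" where
  "hook n i j = (if j = 0 then i else if j \<le> n - i then 1 else 0)"

definition Gamma :: "nat \<Rightarrow> nat \<Rightarrow> (nat \<Rightarrow> nat) \<Rightarrow> int" where
  "Gamma n i \<sigma> = frob_char n (hook n i) \<sigma>"

definition Gamma_e :: "nat \<Rightarrow> (nat \<Rightarrow> nat) \<Rightarrow> int" where
  "Gamma_e n \<sigma> = (\<Sum>i | i \<in> {1..n} \<and> even i. Gamma n i \<sigma>)"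

definition Gamma_o :: "nat \<Rightarrow> (nat \<Rightarrow> nat) \<Rightarrow> int" where
  "Gamma_o n \<sigma> = (\<Sum>i | i \<in> {1..n} \<and> odd i. Gamma n i \<sigma>)"

definition steinberg_like2 :: "nat \<Rightarrow> ((nat \<Rightarrow> nat) \<Rightarrow> int) \<Rightarrow> bool" where
  "steinberg_like2 n \<chi> \<longleftrightarrow>
     (\<forall>\<sigma>. \<sigma> permutes {..<n} \<and> even (perm_order \<sigma>) \<longrightarrow> \<chi> \<sigma> = 0) \<and>
     \<chi> id = 2 ^ multiplicity (2::nat) (fact n)"

end

theory Submission
  imports Defs "HOL-Combinatorics.Orbits"
begin

definition Col :: "nat \<Rightarrow> (nat \<Rightarrow> nat) \<Rightarrow> nat set \<Rightarrow> (nat \<Rightarrow> nat) set" where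
  "Col n \<sigma> X = {f \<in> X \<rightarrow>\<^sub>E {..<n}. \<forall>x\<in>X. f (\<sigma> x) = f x}"

definition Phi :: "nat \<Rightarrow> (nat \<Rightarrow> nat) \<Rightarrow> nat set \<Rightarrow> (nat \<Rightarrow> int) \<Rightarrow> int" where
  "Phi n \<sigma> X \<gamma> = (\<Sum>\<pi> | \<pi> permutes {..<n}. sign \<pi> *
      int (card {f \<in> Col n \<sigma> X. \<forall>j<n. int (card {x\<in>X. f x = j}) = int (\<pi> j) - \<gamma> j}))"

lemma finite_Col: "finite X \<Longrightarrow> finite (Col n \<sigma> X)"
  unfolding Col_def by (rule finite_subset[of _ "X \<rightarrow>\<^sub>E {..<n}"]) (auto intro: finite_PiE)

lemma frob_Phi: "frob_char n lam \<sigma> = Phi n \<sigma> {..<n} (\<lambda>j. int j - int (lam j))"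
  unfolding frob_char_def Phi_def
proof (rule sum.cong[OF refl])
  fix \<pi> assume "\<pi> \<in> {\<pi>. \<pi> permutes {..<n}}"
  then have p: "\<pi> permutes {..<n}" by simp
  have "\<And>i. i < n \<Longrightarrow> \<pi> i < n" using permutes_in_image[OF p] by simp
  then have eq: "\<And>i. i < n \<Longrightarrow> int (lam i) + int (n - 1 - i) - int (n - 1 - \<pi> i) = int (\<pi> i) - (int i - int (lam i))"
    by (simp add: of_nat_diff Suc_le_eq)
  show "sign \<pi> * int (card {f \<in> {..<n} \<rightarrow>\<^sub>E {..<n}. (\<forall>x<n. f (\<sigma> x) = f x) \<and>
                 (\<forall>i<n. int (card {x. x < n \<and> f x = i}) = int (lam i) + int (n - 1 - i) - int (n - 1 - \<pi> i))}) =
        sign \<pi> * int (card {f \<in> Col n \<sigma> {..<n}. \<forall>j<n. int (card {x \<in> {..<n}. f x = j}) = int (\<pi> j) - (int j - int (lam j))})"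
  proof (intro arg_cong[where f="\<lambda>A. sign \<pi> * int (card A)"] Collect_cong)
    fix f :: "nat \<Rightarrow> nat"
    have s: "\<And>i. {x. x < n \<and> f x = i} = {x \<in> {..<n}. f x = i}" by auto
    have "(\<forall>i<n. int (card {x. x < n \<and> f x = i}) = int (lam i) + int (n - 1 - i) - int (n - 1 - \<pi> i))
       \<longleftrightarrow> (\<forall>j<n. int (card {x \<in> {..<n}. f x = j}) = int (\<pi> j) - (int j - int (lam j)))"
    proof (intro iffI allI impI)
      fix j assume H: "\<forall>i<n. int (card {x. x < n \<and> f x = i}) = int (lam i) + int (n - 1 - i) - int (n - 1 - \<pi> i)" and j: "j < n"
      show "int (card {x \<in> {..<n}. f x = j}) = int (\<pi> j) - (int j - int (lam j))"
        using H[rule_format, OF j] eq[OF j] by (simp add: lessThan_def)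
    next
      fix j assume H: "\<forall>i<n. int (card {x \<in> {..<n}. f x = i}) = int (\<pi> i) - (int i - int (lam i))" and j: "j < n"
      show "int (card {x. x < n \<and> f x = j}) = int (lam j) + int (n - 1 - j) - int (n - 1 - \<pi> j)"
        using H[rule_format, OF j] eq[OF j] by (simp add: lessThan_def)
    qed
    then show "(f \<in> {..<n} \<rightarrow>\<^sub>E {..<n} \<and> (\<forall>x<n. f (\<sigma> x) = f x) \<and>
          (\<forall>i<n. int (card {x. x < n \<and> f x = i}) = int (lam i) + int (n - 1 - i) - int (n - 1 - \<pi> i))) =
         (f \<in> Col n \<sigma> {..<n} \<and> (\<forall>j<n. int (card {x \<in> {..<n}. f x = j}) = int (\<pi> j) - (int j - int (lam j))))"
      unfolding Col_def by blast
  qed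
qed

lemma Phi_big:
  assumes "k < n" "\<gamma> k \<ge> int n"
  shows "Phi n \<sigma> X \<gamma> = 0"
  unfolding Phi_def
proof (rule sum.neutral, safe)
  fix \<pi> assume p: "\<pi> permutes {..<n}"
  then have "\<pi> k < n" using permutes_in_image assms(1) by fastforce
  have E: "{f \<in> Col n \<sigma> X. \<forall>j<n. int (card {x\<in>X. f x = j}) = int (\<pi> j) - \<gamma> j} = {}"
  proof (rule ccontr)
    assume "{f \<in> Col n \<sigma> X. \<forall>j<n. int (card {x\<in>X. f x = j}) = int (\<pi> j) - \<gamma> j} \<noteq> {}"
    then obtain f where "\<forall>j<n. int (card {x\<in>X. f x = j}) = int (\<pi> j) - \<gamma> j" by blast
    then have "int (card {x\<in>X. f x = k}) = int (\<pi> k) - \<gamma> k" using assms(1) by blast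
    then show False using \<open>\<pi> k < n\<close> assms(2) by linarith
  qed
  show "sign \<pi> * int (card {f \<in> Col n \<sigma> X. \<forall>j<n. int (card {x\<in>X. f x = j}) = int (\<pi> j) - \<gamma> j}) = 0"
    unfolding E by simp
qed

lemma Phi_cong:
  assumes "\<And>j. j < n \<Longrightarrow> \<gamma> j = \<gamma>' j"
  shows "Phi n \<sigma> X \<gamma> = Phi n \<sigma> X \<gamma>'"
  unfolding Phi_def using assms by (intro sum.cong refl arg_cong[where f="\<lambda>A. _ * int (card A)"]) auto

lemma Phi_empty_id: "Phi n \<sigma> {} (\<lambda>j. int j) = 1"
proof -
  have C: "Col n \<sigma> {} = {\<lambda>x. undefined}" unfolding Col_def by auto
  have "\<And>\<pi>. \<pi> permutes {..<n} \<Longrightarrow>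
     {f \<in> Col n \<sigma> {}. \<forall>j<n. int (card {x\<in>{}. f x = j}) = int (\<pi> j) - int j} = (if \<pi> = id then {\<lambda>x. undefined} else {})"
  proof -
    fix \<pi> assume p: "\<pi> permutes {..<n}"
    have "(\<forall>j<n. 0 = int (\<pi> j) - int j) \<longleftrightarrow> \<pi> = id"
    proof
      assume "\<forall>j<n. 0 = int (\<pi> j) - int j"
      then have "\<And>j. \<pi> j = j" using permutes_not_in[OF p] by (metis eq_iff_diff_eq_0 lessThan_iff of_nat_eq_iff)
      then show "\<pi> = id" by auto
    qed auto
    then show "?thesis \<pi>" using C by auto
  qed
  then have "Phi n \<sigma> {} (\<lambda>j. int j) = (\<Sum>\<pi> | \<pi> permutes {..<n}. (if \<pi> = id then 1 else 0))"
    unfolding Phi_def by (intro sum.cong) auto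
  also have "\<dots> = 1"
    by (subst sum.delta) (auto simp: permutes_id finite_permutations)
  finally show ?thesis .
qed


lemma card_col_transpose:
  assumes a: "a < n" and b: "b < n" and X: "\<sigma> ` X \<subseteq> X"
  shows "card {f \<in> Col n \<sigma> X. \<forall>j<n. int (card {x\<in>X. f x = transpose a b j}) = v j}
       = card {g \<in> Col n \<sigma> X. \<forall>j<n. int (card {x\<in>X. g x = j}) = v j}"
proof -
  let ?t = "transpose a b"
  let ?h = "\<lambda>f. restrict (?t \<circ> f) X"
  have inv: "\<And>y j. ?t y = j \<longleftrightarrow> y = ?t j" by (metis transpose_involutory)
  have cnt: "\<And>f j. {x\<in>X. ?h f x = j} = {x\<in>X. f x = ?t j}"
    by (intro Collect_cong) (simp add: inv)
  have tn: "\<And>y. y < n \<Longrightarrow> ?t y < n" using a b by (auto simp: transpose_def)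
  have hC: "\<And>f. f \<in> Col n \<sigma> X \<Longrightarrow> ?h f \<in> Col n \<sigma> X"
    unfolding Col_def using tn X by (auto simp: PiE_iff)
  have hh: "\<And>f. f \<in> Col n \<sigma> X \<Longrightarrow> ?h (?h f) = f"
    unfolding Col_def by (auto simp: PiE_iff restrict_def fun_eq_iff extensional_def)
  show ?thesis
  proof (rule bij_betw_same_card[of ?h], rule bij_betw_byWitness[where f'="?h"])
    show "\<forall>f\<in>{f \<in> Col n \<sigma> X. \<forall>j<n. int (card {x \<in> X. f x = ?t j}) = v j}. ?h (?h f) = f"
      using hh by blast
    show "\<forall>f\<in>{g \<in> Col n \<sigma> X. \<forall>j<n. int (card {x \<in> X. g x = j}) = v j}. ?h (?h f) = f"
      using hh by blast
    show "?h ` {f \<in> Col n \<sigma> X. \<forall>j<n. int (card {x \<in> X. f x = ?t j}) = v j}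
        \<subseteq> {g \<in> Col n \<sigma> X. \<forall>j<n. int (card {x \<in> X. g x = j}) = v j}"
      using hC cnt by auto
    show "?h ` {g \<in> Col n \<sigma> X. \<forall>j<n. int (card {x \<in> X. g x = j}) = v j}
        \<subseteq> {f \<in> Col n \<sigma> X. \<forall>j<n. int (card {x \<in> X. f x = ?t j}) = v j}"
    proof safe
      fix g assume g: "g \<in> Col n \<sigma> X" and H: "\<forall>j<n. int (card {x \<in> X. g x = j}) = v j"
      show "?h g \<in> Col n \<sigma> X" using hC g .
      fix j assume "j < n"
      have "{x \<in> X. ?h g x = ?t j} = {x\<in>X. g x = j}" using cnt[of g "?t j"] by simp
      then show "int (card {x \<in> X. ?h g x = ?t j}) = v j" using H \<open>j < n\<close> by simp
    qed
  qed
qed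

lemma Phi_swap:
  assumes a: "a < n" and b: "b < n" and ab: "a \<noteq> b" and X: "\<sigma> ` X \<subseteq> X"
  shows "Phi n \<sigma> X (\<gamma> \<circ> transpose a b) = - Phi n \<sigma> X \<gamma>"
proof -
  let ?t = "transpose a b"
  have tp: "?t permutes {..<n}" using a b by (intro permutes_swap_id) auto
  have "Phi n \<sigma> X (\<gamma> \<circ> ?t) = (\<Sum>\<pi> | \<pi> permutes {..<n}. sign (\<pi> \<circ> ?t) *
      int (card {f \<in> Col n \<sigma> X. \<forall>j<n. int (card {x\<in>X. f x = j}) = int ((\<pi> \<circ> ?t) j) - \<gamma> (?t j)}))"
    unfolding Phi_def by (subst sum_permutations_compose_right[OF tp]) simp
  also have "\<dots> = (\<Sum>\<pi> | \<pi> permutes {..<n}. - (sign \<pi> *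
      int (card {f \<in> Col n \<sigma> X. \<forall>j<n. int (card {x\<in>X. f x = j}) = int (\<pi> j) - \<gamma> j})))"
  proof (rule sum.cong[OF refl])
    fix \<pi> assume "\<pi> \<in> {\<pi>. \<pi> permutes {..<n}}"
    then have p: "\<pi> permutes {..<n}" by simp
    have sg: "sign (\<pi> \<circ> ?t) = - sign \<pi>"
      using sign_compose[OF permutes_imp_permutation[OF _ p] permutes_imp_permutation[OF _ tp]] ab
      by (simp add: sign_swap_id)
    have tn: "\<And>y. y < n \<Longrightarrow> ?t y < n" using a b by (auto simp: transpose_def)
    have "{f \<in> Col n \<sigma> X. \<forall>j<n. int (card {x\<in>X. f x = j}) = int ((\<pi> \<circ> ?t) j) - \<gamma> (?t j)}
        = {f \<in> Col n \<sigma> X. \<forall>j<n. int (card {x\<in>X. f x = ?t j}) = int (\<pi> j) - \<gamma> j}"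
    proof (intro Collect_cong conj_cong refl iffI allI impI)
      fix f j assume H: "\<forall>j<n. int (card {x\<in>X. f x = j}) = int ((\<pi> \<circ> ?t) j) - \<gamma> (?t j)" and j: "j < n"
      show "int (card {x\<in>X. f x = ?t j}) = int (\<pi> j) - \<gamma> j" using H[rule_format, OF tn[OF j]] by simp
    next
      fix f j assume H: "\<forall>j<n. int (card {x\<in>X. f x = ?t j}) = int (\<pi> j) - \<gamma> j" and j: "j < n"
      show "int (card {x\<in>X. f x = j}) = int ((\<pi> \<circ> ?t) j) - \<gamma> (?t j)" using H[rule_format, OF tn[OF j]] by simp
    qed
    then show "sign (\<pi> \<circ> ?t) * int (card {f \<in> Col n \<sigma> X. \<forall>j<n. int (card {x\<in>X. f x = j}) = int ((\<pi> \<circ> ?t) j) - \<gamma> (?t j)})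
       = - (sign \<pi> * int (card {f \<in> Col n \<sigma> X. \<forall>j<n. int (card {x\<in>X. f x = j}) = int (\<pi> j) - \<gamma> j}))"
      using sg card_col_transpose[OF a b X, of "\<lambda>j. int (\<pi> j) - \<gamma> j"] by simp
  qed
  also have "\<dots> = - Phi n \<sigma> X \<gamma>" unfolding Phi_def by (simp add: sum_negf)
  finally show ?thesis .
qed

lemma Phi_collide:
  assumes a: "a < n" and b: "b < n" and ab: "a \<noteq> b" and X: "\<sigma> ` X \<subseteq> X" and eq: "\<gamma> a = \<gamma> b"
  shows "Phi n \<sigma> X \<gamma> = 0"
proof -
  have "\<gamma> \<circ> transpose a b = \<gamma>" using eq by (auto simp: fun_eq_iff transpose_def)
  then show ?thesis using Phi_swap[OF a b ab X, of \<gamma>] by simp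
qed

lemma orbit_facts:
  assumes p: "\<sigma> permutes {..<n}" and X: "\<sigma> ` X \<subseteq> X" and x0: "x0 \<in> X"
  shows "orbit \<sigma> x0 \<subseteq> X" "\<sigma> ` (X - orbit \<sigma> x0) \<subseteq> X - orbit \<sigma> x0"
    "\<And>f. f \<in> Col n \<sigma> X \<Longrightarrow> y \<in> orbit \<sigma> x0 \<Longrightarrow> f y = f x0"
    "x0 \<in> orbit \<sigma> x0"
proof -
  have pm: "permutation \<sigma>" using permutes_imp_permutation[OF _ p] by simp
  have O: "orbit \<sigma> x0 = {(\<sigma> ^^ k) x0 | k. True}" by (rule orbit_altdef_permutation[OF pm])
  have k: "\<And>k. (\<sigma> ^^ k) x0 \<in> X"
  proof -
    fix k show "(\<sigma> ^^ k) x0 \<in> X" by (induct k) (use x0 X in auto)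
  qed
  show "orbit \<sigma> x0 \<subseteq> X" unfolding O using k by auto
  show "x0 \<in> orbit \<sigma> x0" by (rule permutation_self_in_orbit[OF pm])
  show "\<sigma> ` (X - orbit \<sigma> x0) \<subseteq> X - orbit \<sigma> x0"
  proof safe
    fix y assume "y \<in> X" "y \<notin> orbit \<sigma> x0"
    then show "\<sigma> y \<in> X" using X by auto
    assume "\<sigma> y \<in> orbit \<sigma> x0"
    moreover have "y \<in> orbit \<sigma> (\<sigma> y)"
      using permutation_orbit_step[OF pm, of y] permutation_self_in_orbit[OF pm, of y] by simp
    ultimately have "y \<in> orbit \<sigma> x0" using orbit_trans by metis
    then show False using \<open>y \<notin> orbit \<sigma> x0\<close> by simp
  qed
  fix f assume f: "f \<in> Col n \<sigma> X" and y: "y \<in> orbit \<sigma> x0"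
  have "\<And>k. f ((\<sigma> ^^ k) x0) = f x0"
  proof -
    fix k show "f ((\<sigma> ^^ k) x0) = f x0"
      by (induct k) (use f k in \<open>auto simp: Col_def\<close>)
  qed
  then show "f y = f x0" using y unfolding O by auto
qed

lemma Phi_orbit:
  assumes p: "\<sigma> permutes {..<n}" and Xn: "X \<subseteq> {..<n}" and X: "\<sigma> ` X \<subseteq> X" and x0: "x0 \<in> X"
  shows "Phi n \<sigma> X \<gamma> = (\<Sum>j<n. Phi n \<sigma> (X - orbit \<sigma> x0) (\<gamma>(j := \<gamma> j + int (card (orbit \<sigma> x0)))))"
proof -
  let ?O = "orbit \<sigma> x0"
  let ?Y = "X - ?O"
  let ?l = "card ?O"
  note of = orbit_facts[OF p X x0]
  have finX: "finite X" using Xn finite_subset by blast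
  have finO: "finite ?O" using of(1) finX finite_subset by blast
  have key: "card {f \<in> Col n \<sigma> X. \<forall>k<n. int (card {x\<in>X. f x = k}) = int (\<pi> k) - \<gamma> k}
     = (\<Sum>j<n. card {g \<in> Col n \<sigma> ?Y. \<forall>k<n. int (card {x\<in>?Y. g x = k}) = int (\<pi> k) - (\<gamma>(j := \<gamma> j + int ?l)) k})"
    for \<pi>
  proof -
    let ?P = "\<lambda>f. \<forall>k<n. int (card {x\<in>X. f x = k}) = int (\<pi> k) - \<gamma> k"
    let ?A = "\<lambda>j. {f \<in> Col n \<sigma> X. f x0 = j \<and> ?P f}"
    have "{f \<in> Col n \<sigma> X. ?P f} = (\<Union>j\<in>{..<n}. ?A j)"
      using x0 by (auto simp: Col_def)
    then have "card {f \<in> Col n \<sigma> X. ?P f} = (\<Sum>j<n. card (?A j))"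
      using finite_Col[OF finX] by (simp add: card_UN_disjoint) (subst card_UN_disjoint, auto)
    also have "\<dots> = (\<Sum>j<n. card {g \<in> Col n \<sigma> ?Y. \<forall>k<n. int (card {x\<in>?Y. g x = k}) = int (\<pi> k) - (\<gamma>(j := \<gamma> j + int ?l)) k})"
    proof (rule sum.cong[OF refl])
      fix j assume j: "j \<in> {..<n}"
      let ?r = "\<lambda>f. restrict f ?Y"
      let ?e = "\<lambda>g x. if x \<in> ?O then j else g x"
      have cntX: "int (card {x\<in>X. f x = k}) = int (card {x\<in>?Y. f x = k}) + (if k = j then int ?l else 0)"
        if f: "f \<in> Col n \<sigma> X" "f x0 = j" for f k
      proof -
        have fO: "\<And>y. y \<in> ?O \<Longrightarrow> f y = j" using of(3)[OF f(1)] f(2) by simp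
        have "{x\<in>X. f x = k} = {x\<in>?Y. f x = k} \<union> (if k = j then ?O else {})"
          using fO of(1) by auto
        moreover have "card ({x\<in>?Y. f x = k} \<union> (if k = j then ?O else {})) = card {x\<in>?Y. f x = k} + (if k = j then ?l else 0)"
          using finX finO by (cases "k = j") (auto intro!: card_Un_disjoint)
        ultimately show ?thesis by simp
      qed
      have cntr: "{x\<in>?Y. ?r f x = k} = {x\<in>?Y. f x = k}" for f k by auto
      have cnte: "{x\<in>?Y. ?e g x = k} = {x\<in>?Y. g x = k}" for g k by auto
      show "card (?A j) = card {g \<in> Col n \<sigma> ?Y. \<forall>k<n. int (card {x\<in>?Y. g x = k}) = int (\<pi> k) - (\<gamma>(j := \<gamma> j + int ?l)) k}"
      proof (rule bij_betw_same_card[of ?r], rule bij_betw_byWitness[where f'="?e"])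
        show "\<forall>f\<in>?A j. ?e (?r f) = f"
        proof
          fix f assume "f \<in> ?A j"
          then have f: "f \<in> Col n \<sigma> X" "f x0 = j" by auto
          show "?e (?r f) = f"
          proof
            fix x show "?e (?r f) x = f x"
              using of(3)[OF f(1)] f(2) of(1) f(1) by (auto simp: Col_def PiE_iff extensional_def)
          qed
        qed
        show "\<forall>g\<in>{g \<in> Col n \<sigma> ?Y. \<forall>k<n. int (card {x\<in>?Y. g x = k}) = int (\<pi> k) - (\<gamma>(j := \<gamma> j + int ?l)) k}. ?r (?e g) = g"
          by (auto simp: Col_def PiE_iff extensional_def fun_eq_iff)
        show "?r ` ?A j \<subseteq> {g \<in> Col n \<sigma> ?Y. \<forall>k<n. int (card {x\<in>?Y. g x = k}) = int (\<pi> k) - (\<gamma>(j := \<gamma> j + int ?l)) k}"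
        proof safe
          fix f assume f: "f \<in> Col n \<sigma> X" "j = f x0" and P: "?P f"
          show "?r f \<in> Col n \<sigma> ?Y" using f(1) of(2) by (auto simp: Col_def PiE_iff)
          fix k assume k: "k < n"
          show "int (card {x\<in>?Y. ?r f x = k}) = int (\<pi> k) - (\<gamma>(f x0 := \<gamma> (f x0) + int ?l)) k"
            using P[rule_format, OF k] cntX[OF f(1) f(2)[symmetric], of k] unfolding cntr f(2) by auto
        qed
        show "?e ` {g \<in> Col n \<sigma> ?Y. \<forall>k<n. int (card {x\<in>?Y. g x = k}) = int (\<pi> k) - (\<gamma>(j := \<gamma> j + int ?l)) k} \<subseteq> ?A j"
        proof safe
          fix g assume g: "g \<in> Col n \<sigma> ?Y" and P: "\<forall>k<n. int (card {x\<in>?Y. g x = k}) = int (\<pi> k) - (\<gamma>(j := \<gamma> j + int ?l)) k"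
          have eC: "?e g \<in> Col n \<sigma> X"
          proof -
            have "\<And>x. x \<in> ?O \<Longrightarrow> \<sigma> x \<in> ?O" using orbit.step by metis
            moreover have "\<And>x. x \<in> ?Y \<Longrightarrow> \<sigma> x \<in> ?Y" using of(2) by auto
            ultimately show ?thesis using g j of(1) by (auto simp: Col_def PiE_iff extensional_def)
          qed
          show "?e g \<in> Col n \<sigma> X" by (rule eC)
          show "?e g x0 = j" using of(4) by simp
          fix k assume k: "k < n"
          show "int (card {x\<in>X. ?e g x = k}) = int (\<pi> k) - \<gamma> k"
            using P[rule_format, OF k] cntX[OF eC, of k] of(4) unfolding cnte by auto
        qed
      qed
    qed
    finally show ?thesis .
  qed
  show ?thesis
    unfolding Phi_def
    by (simp add: key sum_distrib_left) (rule sum.swap)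
qed

definition hs :: "nat \<Rightarrow> int \<Rightarrow> nat \<Rightarrow> int" where
  "hs p q k = (if k = 0 then q else if k \<le> p then int k - 1 else int k)"

definition G :: "nat \<Rightarrow> nat \<Rightarrow> int \<Rightarrow> nat \<Rightarrow> nat \<Rightarrow> int" where
  "G s p q t k = (if k = 0 \<and> 0 < s then q else if k < s then int k - 1 else if k < t then int k
      else if k = t then int p else if k \<le> p then int k - 1 else int k)"

lemma G_step:
  assumes "s \<le> t" "t < p" "p < n" "\<sigma> ` Y \<subseteq> Y"
  shows "Phi n \<sigma> Y (G s p q t) = - Phi n \<sigma> Y (G s p q (Suc t))"
proof -
  have "G s p q (Suc t) = G s p q t \<circ> transpose t (Suc t)"
    using assms(1,2) by (auto simp: fun_eq_iff G_def transpose_def)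
  then show ?thesis using Phi_swap[of t n "Suc t" \<sigma> Y "G s p q t"] assms by simp
qed

lemma G_iter:
  assumes "s + d \<le> p" "p < n" "\<sigma> ` Y \<subseteq> Y"
  shows "Phi n \<sigma> Y (G s p q s) = (-1) ^ d * Phi n \<sigma> Y (G s p q (s + d))"
  using assms(1)
proof (induct d)
  case (Suc d)
  then have "Phi n \<sigma> Y (G s p q (s + d)) = - Phi n \<sigma> Y (G s p q (Suc (s + d)))"
    by (intro G_step) (use assms in auto)
  then show ?case using Suc by simp
qed simp

lemma Phi_G:
  assumes "s \<le> p" "p < n" "\<sigma> ` Y \<subseteq> Y"
  shows "Phi n \<sigma> Y (G s p q s) = (-1) ^ (p - s) * Phi n \<sigma> Y (G s p q p)"
  using G_iter[of s "p - s" p n \<sigma> Y q] assms by simp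

lemma Phi_empty_hs:
  assumes "p < n"
  shows "Phi n \<sigma> {} (hs p (int p)) = (-1) ^ p"
proof -
  have "hs p (int p) = G 0 p 0 0" by (auto simp: fun_eq_iff hs_def G_def)
  moreover have "G 0 p 0 p = (\<lambda>j. int j)" by (auto simp: fun_eq_iff G_def)
  ultimately show ?thesis using Phi_G[of 0 p n \<sigma> "{}" 0] assms Phi_empty_id by simp
qed

definition psi :: "nat \<Rightarrow> (nat \<Rightarrow> nat) \<Rightarrow> nat set \<Rightarrow> nat \<Rightarrow> int" where
  "psi n \<sigma> X p = Phi n \<sigma> X (hs p (int p - int (card X)))"

lemma F_zero:
  assumes Y: "\<sigma> ` Y \<subseteq> Y" and j: "1 \<le> j" "j < n" and p: "p < n" and l: "1 \<le> l"
    and nj: "\<not> (l \<le> p \<and> j = Suc p - l)"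
  shows "Phi n \<sigma> Y ((hs p q)(j := hs p q j + int l)) = 0"
proof -
  let ?g = "(hs p q)(j := hs p q j + int l)"
  show ?thesis
  proof (cases "j \<le> p")
    case True
    then have gj: "?g j = int j - 1 + int l" using j by (simp add: hs_def)
    have ne: "j - 1 + l \<noteq> p" using nj True j by auto
    show ?thesis
    proof (cases "j - 1 + l < p")
      case True
      let ?k = "j + l"
      have "?g ?k = ?g j" using True j l by (auto simp: hs_def)
      then show ?thesis using True p j l Y by (intro Phi_collide[of j n ?k]) auto
    next
      case False
      then have gt: "p < j - 1 + l" using ne by auto
      show ?thesis
      proof (cases "j - 1 + l < n")
        case True
        let ?k = "j - 1 + l"
        have "?g ?k = ?g j" using True gt j l \<open>j \<le> p\<close> by (auto simp: hs_def)
        then show ?thesis using True gt \<open>j \<le> p\<close> j Y by (intro Phi_collide[of j n ?k]) auto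
      next
        case False
        then show ?thesis using j gj by (intro Phi_big[of j]) auto
      qed
    qed
  next
    case False
    then have gj: "?g j = int j + int l" using j by (simp add: hs_def)
    show ?thesis
    proof (cases "j + l < n")
      case True
      let ?k = "j + l"
      have "?g ?k = ?g j" using True False j l by (auto simp: hs_def)
      then show ?thesis using True j l Y by (intro Phi_collide[of j n ?k]) auto
    next
      case False
      then show ?thesis using j gj by (intro Phi_big[of j]) auto
    qed
  qed
qed

lemma psi_rec:
  assumes pm: "\<sigma> permutes {..<n}" and Xn: "X \<subseteq> {..<n}" and X: "\<sigma> ` X \<subseteq> X" and x0: "x0 \<in> X"
    and p: "p < card X"
  defines "Y \<equiv> X - orbit \<sigma> x0" and "l \<equiv> card (orbit \<sigma> x0)"
  shows "psi n \<sigma> X p = (if p < card Y then psi n \<sigma> Y p else 0) + (if Y = {} then (-1) ^ p else 0)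
      + (if l \<le> p then (-1) ^ (l - 1) * psi n \<sigma> Y (p - l) else 0)"
proof -
  note of = orbit_facts[OF pm X x0]
  have finX: "finite X" using Xn finite_subset by blast
  have finO: "finite (orbit \<sigma> x0)" using of(1) finX finite_subset by blast
  have cX: "card X = card Y + l" unfolding Y_def l_def
    using card_Diff_subset[OF finO of(1)] card_mono[OF finX of(1)] by simp
  have l1: "1 \<le> l" unfolding l_def using of(4) finO by (metis One_nat_def Suc_leI card_gt_0_iff empty_iff)
  have pn: "p < n" using p card_mono[OF _ Xn] using card_mono[OF finite_lessThan Xn] by simp
  have Yinv: "\<sigma> ` Y \<subseteq> Y" unfolding Y_def by (rule of(2))
  define q where "q = int p - int (card X)"
  let ?F = "\<lambda>j. Phi n \<sigma> Y ((hs p q)(j := hs p q j + int l))"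
  have "psi n \<sigma> X p = (\<Sum>j<n. ?F j)"
    unfolding psi_def q_def[symmetric] l_def Y_def by (rule Phi_orbit[OF pm Xn X x0])
  also have "\<dots> = ?F 0 + (\<Sum>j\<in>{1..<n}. ?F j)"
  proof -
    have "{..<n} = insert 0 {1..<n}" using pn by auto
    then show ?thesis by simp
  qed
  also have "(\<Sum>j\<in>{1..<n}. ?F j) = (if l \<le> p then (-1) ^ (l - 1) * psi n \<sigma> Y (p - l) else 0)"
  proof (cases "l \<le> p")
    case True
    define s where "s = Suc p - l"
    have s: "1 \<le> s" "s \<le> p" "s < n" using True l1 pn unfolding s_def by auto
    have "(\<Sum>j\<in>{1..<n}. ?F j) = ?F s + (\<Sum>j\<in>{1..<n} - {s}. ?F j)"
      using s by (subst sum.remove[of _ s]) auto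
    also have "(\<Sum>j\<in>{1..<n} - {s}. ?F j) = 0"
    proof (rule sum.neutral, rule ballI)
      fix j assume "j \<in> {1..<n} - {s}"
      then have "1 \<le> j" "j < n" "\<not> (l \<le> p \<and> j = Suc p - l)" unfolding s_def by auto
      then show "?F j = 0" using F_zero[OF Yinv _ _ pn l1] by blast
    qed
    also have "?F s = (-1) ^ (l - 1) * psi n \<sigma> Y (p - l)"
    proof -
      have e1: "(hs p q)(s := hs p q s + int l) = G s p q s"
        using s True by (auto simp: fun_eq_iff hs_def G_def s_def)
      have e2: "G s p q p = hs (p - l) (int (p - l) - int (card Y))"
        using s True cX by (auto simp: fun_eq_iff hs_def G_def s_def q_def)
      show ?thesis using Phi_G[OF s(2) pn Yinv, of q] unfolding e1 e2 psi_def
        using True s_def by (simp add: Suc_diff_le)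
    qed
    finally show ?thesis using True by (simp only: if_P add_0_right)
  next
    case False
    have "(\<Sum>j\<in>{1..<n}. ?F j) = 0"
    proof (intro sum.neutral ballI)
      fix j assume "j \<in> {1..<n}"
      then have "1 \<le> j" "j < n" "\<not> (l \<le> p \<and> j = Suc p - l)" using False by auto
      then show "?F j = 0" using F_zero[OF Yinv _ _ pn l1] by blast
    qed
    then show ?thesis using False by (simp only: if_not_P if_False)
  qed
  also have "?F 0 = (if p < card Y then psi n \<sigma> Y p else 0) + (if Y = {} then (-1) ^ p else 0)"
  proof -
    have g0: "(hs p q)(0 := hs p q 0 + int l) = hs p (int p - int (card Y))"
      using cX by (auto simp: fun_eq_iff hs_def q_def)
    show ?thesis
    proof (cases "p < card Y")
      case True
      then have "Y \<noteq> {}" by auto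
      then show ?thesis using True g0 by (simp add: psi_def)
    next
      case False
      show ?thesis
      proof (cases "Y = {}")
        case True
        then show ?thesis using g0 Phi_empty_hs[OF pn] by simp
      next
        case False
        have finY: "finite Y" unfolding Y_def using finX by simp
        then have cY: "0 < card Y" using False by (simp add: card_gt_0_iff)
        let ?k = "p - card Y + 1"
        have "hs p (int p - int (card Y)) ?k = hs p (int p - int (card Y)) 0"
          using \<open>\<not> p < card Y\<close> cY by (auto simp: hs_def)
        then have "Phi n \<sigma> Y (hs p (int p - int (card Y))) = 0"
          using \<open>\<not> p < card Y\<close> cY pn Yinv by (intro Phi_collide[of ?k n 0]) auto
        then show ?thesis using g0 False \<open>\<not> p < card Y\<close> by simp
      qed
    qed
  qed
  finally show ?thesis by simp
qed

definition AA :: "nat \<Rightarrow> (nat \<Rightarrow> nat) \<Rightarrow> nat set \<Rightarrow> int" where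
  "AA n \<sigma> X = (\<Sum>p<card X. psi n \<sigma> X p)"

definition DD :: "nat \<Rightarrow> (nat \<Rightarrow> nat) \<Rightarrow> nat set \<Rightarrow> int" where
  "DD n \<sigma> X = (\<Sum>p<card X. (-1) ^ p * psi n \<sigma> X p)"

lemma sum_shift_if:
  "(\<Sum>p<l + (m::nat). (if l \<le> p then h (p - l) else 0)) = (\<Sum>p<m. h p :: int)"
  by (induct m) (auto simp: add_Suc_right)

lemma sum_trunc_if:
  "(\<Sum>p<m + (l::nat). (if p < m then g p else 0)) = (\<Sum>p<m. g p :: int)"
  by (induct l) auto

lemma AD_rec:
  assumes pm: "\<sigma> permutes {..<n}" and Xn: "X \<subseteq> {..<n}" and X: "\<sigma> ` X \<subseteq> X" and x0: "x0 \<in> X"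
  defines "Y \<equiv> X - orbit \<sigma> x0" and "l \<equiv> card (orbit \<sigma> x0)"
  shows "AA n \<sigma> X = (1 + (-1) ^ (l - 1)) * AA n \<sigma> Y + (if Y = {} then (\<Sum>p<l. (-1) ^ p) else 0)"
    and "DD n \<sigma> X = (if Y = {} then int l else 0)"
proof -
  note of = orbit_facts[OF pm X x0]
  have finX: "finite X" using Xn finite_subset by blast
  have finO: "finite (orbit \<sigma> x0)" using of(1) finX finite_subset by blast
  have cX: "card X = card Y + l" unfolding Y_def l_def
    using card_Diff_subset[OF finO of(1)] card_mono[OF finX of(1)] by simp
  have l1: "1 \<le> l" unfolding l_def using of(4) finO by (metis One_nat_def Suc_leI card_gt_0_iff empty_iff)
  have R: "\<And>p. p < card X \<Longrightarrow> psi n \<sigma> X p = (if p < card Y then psi n \<sigma> Y p else 0) + (if Y = {} then (-1) ^ p else 0)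
      + (if l \<le> p then (-1) ^ (l - 1) * psi n \<sigma> Y (p - l) else 0)"
    unfolding Y_def l_def by (rule psi_rec[OF pm Xn X x0])
  have EY: "Y = {} \<Longrightarrow> card X = l" using cX by simp
  have "AA n \<sigma> X = (\<Sum>p<card Y + l. (if p < card Y then psi n \<sigma> Y p else 0)) + (\<Sum>p<card X. (if Y = {} then (-1) ^ p else 0))
     + (\<Sum>p<l + card Y. (if l \<le> p then (-1) ^ (l - 1) * psi n \<sigma> Y (p - l) else 0))"
  proof -
    have "AA n \<sigma> X = (\<Sum>p<card X. ((if p < card Y then psi n \<sigma> Y p else 0) + (if Y = {} then (-1) ^ p else 0))
      + (if l \<le> p then (-1) ^ (l - 1) * psi n \<sigma> Y (p - l) else 0))"
      unfolding AA_def by (rule sum.cong[OF refl]) (simp only: R lessThan_iff)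
    also have "\<dots> = (\<Sum>p<card X. (if p < card Y then psi n \<sigma> Y p else 0)) + (\<Sum>p<card X. (if Y = {} then (-1) ^ p else 0))
     + (\<Sum>p<card X. (if l \<le> p then (-1) ^ (l - 1) * psi n \<sigma> Y (p - l) else 0))"
      by (simp only: sum.distrib)
    finally show ?thesis using cX by (simp only: add.commute[of l])
  qed
  also have "\<dots> = AA n \<sigma> Y + (if Y = {} then (\<Sum>p<l. (-1) ^ p) else 0) + (-1) ^ (l - 1) * AA n \<sigma> Y"
    unfolding sum_trunc_if sum_shift_if[where l=l and m="card Y" and h="\<lambda>k. (-1) ^ (l - 1) * psi n \<sigma> Y k"] AA_def using EY by (simp add: sum_distrib_left)
  finally show "AA n \<sigma> X = (1 + (-1) ^ (l - 1)) * AA n \<sigma> Y + (if Y = {} then (\<Sum>p<l. (-1) ^ p) else 0)"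
    by (simp add: algebra_simps)
  have sg: "\<And>p. l \<le> p \<Longrightarrow> (-1) ^ p * ((-1) ^ (l - 1) * psi n \<sigma> Y (p - l)) = - ((-1) ^ (p - l) * psi n \<sigma> Y (p - l) :: int)"
  proof -
    fix p assume "l \<le> p"
    then have "p = (p - l) + (l - 1) + 1" using l1 by simp
    then have "(-1::int) ^ p = (-1) ^ ((p - l) + (l - 1) + 1)" by (simp only:)
    also have "\<dots> = (-1) ^ (p - l) * (-1) ^ (l - 1) * (-1)" by (simp only: power_add power_one_right)
    finally have e: "(-1::int) ^ p = (-1) ^ (p - l) * (-1) ^ (l - 1) * (-1)" .
    have sq: "\<And>k. (-1::int) ^ k * (-1) ^ k = 1" by (induct_tac k) auto
    have "(-1::int) ^ p * (-1) ^ (l - 1) = - ((-1) ^ (p - l)) * ((-1) ^ (l - 1) * (-1) ^ (l - 1))"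
      unfolding e by (simp add: algebra_simps)
    then have "(-1::int) ^ p * (-1) ^ (l - 1) = - ((-1) ^ (p - l))" unfolding sq by simp
    then show "?thesis p" by (metis mult.assoc mult_minus_left)
  qed
  have "DD n \<sigma> X = (\<Sum>p<card Y + l. (if p < card Y then (-1) ^ p * psi n \<sigma> Y p else 0)) + (\<Sum>p<card X. (if Y = {} then (-1) ^ p * (-1) ^ p else 0))
     + (\<Sum>p<l + card Y. (if l \<le> p then - ((-1) ^ (p - l) * psi n \<sigma> Y (p - l)) else 0))"
  proof -
    have "DD n \<sigma> X = (\<Sum>p<card X. ((if p < card Y then (-1) ^ p * psi n \<sigma> Y p else 0) + (if Y = {} then (-1) ^ p * (-1) ^ p else 0))
      + (if l \<le> p then - ((-1) ^ (p - l) * psi n \<sigma> Y (p - l)) else 0))"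
      unfolding DD_def
    proof (rule sum.cong[OF refl])
      fix p assume "p \<in> {..<card X}"
      then show "(-1) ^ p * psi n \<sigma> X p = ((if p < card Y then (-1) ^ p * psi n \<sigma> Y p else 0) + (if Y = {} then (-1) ^ p * (-1) ^ p else 0))
      + (if l \<le> p then - ((-1) ^ (p - l) * psi n \<sigma> Y (p - l)) else 0)"
        using R[of p] sg[of p] by (simp add: distrib_left)
    qed
    also have "\<dots> = (\<Sum>p<card X. (if p < card Y then (-1) ^ p * psi n \<sigma> Y p else 0)) + (\<Sum>p<card X. (if Y = {} then (-1) ^ p * (-1) ^ p else 0))
     + (\<Sum>p<card X. (if l \<le> p then - ((-1) ^ (p - l) * psi n \<sigma> Y (p - l)) else 0))"
      by (simp only: sum.distrib)
    finally show ?thesis using cX by (simp only: add.commute[of l])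
  qed
  also have "\<dots> = DD n \<sigma> Y + (if Y = {} then int l else 0) - DD n \<sigma> Y"
    unfolding sum_trunc_if sum_shift_if[where l=l and m="card Y" and h="\<lambda>k. - ((-1) ^ k * psi n \<sigma> Y k)"] DD_def using EY by (simp add: sum_negf)
  finally show "DD n \<sigma> X = (if Y = {} then int l else 0)" by simp
qed

lemma Gamma_psi:
  assumes "1 \<le> i" "i \<le> n"
  shows "Gamma n i \<sigma> = psi n \<sigma> {..<n} (n - i)"
  unfolding Gamma_def frob_Phi psi_def
  by (rule Phi_cong) (use assms in \<open>auto simp: hook_def hs_def of_nat_diff\<close>)

lemma sum_parity_split:
  "(\<Sum>i\<in>{1..(n::nat)}. g i) = (\<Sum>i | i \<in> {1..n} \<and> even i. g i) + (\<Sum>i | i \<in> {1..n} \<and> odd i. (g i :: int))"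
proof -
  have "sum g {1..n} = sum g ({i. i \<in> {1..n} \<and> even i} \<union> {i. i \<in> {1..n} \<and> odd i})"
    by (rule arg_cong[where f="sum g"]) auto
  also have "\<dots> = sum g {i. i \<in> {1..n} \<and> even i} + sum g {i. i \<in> {1..n} \<and> odd i}"
    by (rule sum.union_disjoint) (use finite_atLeastAtMost[of 1 n] in auto)
  finally show ?thesis .
qed

lemma Gamma_AD:
  assumes "odd n"
  shows "2 * Gamma_e n \<sigma> = AA n \<sigma> {..<n} - DD n \<sigma> {..<n}"
    and "2 * Gamma_o n \<sigma> = AA n \<sigma> {..<n} + DD n \<sigma> {..<n}"
proof -
  have ri: "\<And>f. (\<Sum>p<n. f p) = (\<Sum>i\<in>{1..n}. f (n - i) :: int)"
    by (rule sum.reindex_bij_witness[where i="\<lambda>i. n - i" and j="\<lambda>p. n - p"]) auto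
  have A: "AA n \<sigma> {..<n} = (\<Sum>i\<in>{1..n}. Gamma n i \<sigma>)"
    unfolding AA_def by (simp add: ri Gamma_psi)
  have D: "DD n \<sigma> {..<n} = (\<Sum>i\<in>{1..n}. (-1) ^ (n - i) * Gamma n i \<sigma>)"
    unfolding DD_def by (simp add: ri Gamma_psi)
  have se: "(\<Sum>i | i \<in> {1..n} \<and> even i. (-1) ^ (n - i) * Gamma n i \<sigma>) = - Gamma_e n \<sigma>"
    unfolding Gamma_e_def sum_negf[symmetric]
    by (rule sum.cong[OF refl]) (use assms in \<open>auto simp: minus_one_power_iff even_diff_nat\<close>)
  have so: "(\<Sum>i | i \<in> {1..n} \<and> odd i. (-1) ^ (n - i) * Gamma n i \<sigma>) = Gamma_o n \<sigma>"
    unfolding Gamma_o_def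
    by (rule sum.cong[OF refl]) (use assms in \<open>auto simp: minus_one_power_iff even_diff_nat\<close>)
  have "AA n \<sigma> {..<n} = Gamma_e n \<sigma> + Gamma_o n \<sigma>"
    unfolding A Gamma_e_def Gamma_o_def by (rule sum_parity_split)
  moreover have "DD n \<sigma> {..<n} = - Gamma_e n \<sigma> + Gamma_o n \<sigma>"
    unfolding D se[symmetric] so[symmetric] by (rule sum_parity_split)
  ultimately show "2 * Gamma_e n \<sigma> = AA n \<sigma> {..<n} - DD n \<sigma> {..<n}"
    and "2 * Gamma_o n \<sigma> = AA n \<sigma> {..<n} + DD n \<sigma> {..<n}" by simp_all
qed

fun bc :: "nat \<Rightarrow> nat" where
  "bc m = (if m = 0 then 0 else m mod 2 + bc (m div 2))"

declare bc.simps[simp del]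

lemma fS: "(fact (Suc k) :: nat) = Suc k * fact k"
  by (simp only: fact_Suc of_nat_id)

lemma v2_double: "multiplicity (2::nat) (fact (2 * m)) = m + multiplicity (2::nat) (fact m)"
proof (induct m)
  case 0 then show ?case by simp
next
  case (Suc m)
  have p2: "prime_elem (2::nat)" by (rule prime_imp_prime_elem[OF two_is_prime_nat])
  have e: "(fact (2 * Suc m) :: nat) = (2 * Suc m) * (Suc (2 * m) * fact (2 * m))"
  proof -
    have t: "2 * Suc m = Suc (Suc (2 * m))" by simp
    show ?thesis by (simp only: t fS)
  qed
  have m1: "multiplicity (2::nat) (2 * Suc m) = Suc (multiplicity 2 (Suc m))"
    by (rule multiplicity_times_same) simp_all
  have m2: "multiplicity (2::nat) (Suc (2 * m)) = 0"
    by (rule not_dvd_imp_multiplicity_0) simp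
  have m3: "multiplicity (2::nat) (fact (Suc m)) = multiplicity (2::nat) (Suc m) + multiplicity (2::nat) (fact m)"
    unfolding fS by (rule prime_elem_multiplicity_mult_distrib[OF p2]) auto
  have "multiplicity (2::nat) (fact (2 * Suc m)) = multiplicity (2::nat) (2 * Suc m) + (multiplicity (2::nat) (Suc (2 * m)) + multiplicity (2::nat) (fact (2 * m)))"
    unfolding e by (subst prime_elem_multiplicity_mult_distrib[OF p2], simp, simp, subst prime_elem_multiplicity_mult_distrib[OF p2]) auto
  then show ?case using Suc m1 m2 m3 by simp
qed

lemma v2_odd: "multiplicity (2::nat) (fact (Suc (2 * m))) = multiplicity (2::nat) (fact (2 * m))"
proof -
  have p2: "prime_elem (2::nat)" by (rule prime_imp_prime_elem[OF two_is_prime_nat])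
  have "multiplicity (2::nat) (fact (Suc (2 * m))) = multiplicity (2::nat) (Suc (2 * m)) + multiplicity (2::nat) (fact (2 * m))"
    unfolding fS by (rule prime_elem_multiplicity_mult_distrib[OF p2]) auto
  moreover have "multiplicity (2::nat) (Suc (2 * m)) = 0"
    by (rule not_dvd_imp_multiplicity_0) simp
  ultimately show ?thesis by simp
qed

lemma legendre2: "multiplicity (2::nat) (fact m) + bc m = m"
proof (induct m rule: less_induct)
  case (less m)
  show ?case
  proof (cases "m = 0")
    case True then show ?thesis by (simp add: bc.simps)
  next
    case False
    then have lt: "m div 2 < m" by simp
    have b: "bc m = m mod 2 + bc (m div 2)" using False by (simp add: bc.simps)
    show ?thesis
    proof (cases "even m")
      case True
      then obtain k where k: "m = 2 * k" by blast
      then show ?thesis using less[OF lt] b v2_double[of k] by simp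
    next
      case False
      then obtain k where k: "m = Suc (2 * k)" using oddE by (metis Suc_eq_plus1)
      then show ?thesis using less[OF lt] b v2_odd[of k] v2_double[of k] by simp
    qed
  qed
qed

lemma bc_pos: "0 < m \<Longrightarrow> 1 \<le> bc m"
proof (induct m rule: less_induct)
  case (less m)
  have b: "bc m = m mod 2 + bc (m div 2)" using less.prems by (simp add: bc.simps)
  show ?case
  proof (cases "m = 1")
    case True then show ?thesis using b by (simp add: bc.simps)
  next
    case False
    then have "0 < m div 2" "m div 2 < m" using less.prems by auto
    then show ?thesis using less.hyps b by fastforce
  qed
qed

lemma bc_one: "0 < m \<Longrightarrow> bc m = 1 \<longleftrightarrow> (\<exists>k. m = 2 ^ k)"
proof (induct m rule: less_induct)
  case (less m)
  have b: "bc m = m mod 2 + bc (m div 2)" using less.prems by (simp add: bc.simps)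
  show ?case
  proof (cases "m = 1")
    case True then show ?thesis using b by (auto simp: bc.simps intro: exI[of _ 0])
  next
    case False
    then have h: "0 < m div 2" "m div 2 < m" using less.prems by auto
    have p1: "1 \<le> bc (m div 2)" using bc_pos[OF h(1)] .
    show ?thesis
    proof
      assume "bc m = 1"
      then have "even m" "bc (m div 2) = 1" using b p1 by (auto simp: even_iff_mod_2_eq_zero)
      then obtain k where "m div 2 = 2 ^ k" using less.hyps[OF h(2) h(1)] by blast
      then have "m = 2 ^ Suc k" using \<open>even m\<close> by (metis dvd_mult_div_cancel power_Suc)
      then show "\<exists>k. m = 2 ^ k" by blast
    next
      assume "\<exists>k. m = 2 ^ k"
      then obtain k where k: "m = 2 ^ k" by blast
      then have "k \<noteq> 0" using False by auto
      then obtain k' where k': "k = Suc k'" using not0_implies_Suc by blast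
      then have "m div 2 = 2 ^ k'" "m mod 2 = 0" using k by auto
      then show "bc m = 1" using b less.hyps[OF h(2) h(1)] by auto
    qed
  qed
qed

lemma v2_target:
  assumes "odd n" "3 \<le> n"
  shows "n - 2 = multiplicity (2::nat) (fact n) \<longleftrightarrow> (\<exists>k::nat. 0 < k \<and> n = 2 ^ k + 1)"
proof -
  obtain m where m: "n = Suc (2 * m)" using assms(1) oddE by (metis Suc_eq_plus1)
  have v: "multiplicity (2::nat) (fact n) = 2 * m - bc (2 * m)"
    using m v2_odd[of m] legendre2[of "2 * m"] by simp
  have m1: "0 < 2 * m" using assms m by simp
  have bp: "1 \<le> bc (2 * m)" using bc_pos[OF m1] .
  have bl: "bc (2 * m) \<le> 2 * m" using legendre2[of "2 * m"] by simp
  have "n - 2 = multiplicity (2::nat) (fact n) \<longleftrightarrow> bc (2 * m) = 1"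
    unfolding v using m bp bl by auto
  also have "\<dots> \<longleftrightarrow> (\<exists>k. 2 * m = 2 ^ k)" using bc_one[OF m1] .
  also have "\<dots> \<longleftrightarrow> (\<exists>k::nat. 0 < k \<and> n = 2 ^ k + 1)"
  proof
    assume "\<exists>k. 2 * m = 2 ^ k"
    then obtain k where k: "2 * m = 2 ^ k" by blast
    then have "k \<noteq> 0" using m1 assms m by (metis One_nat_def power_0 Suc_1 less_numeral_extra(3) nat_mult_eq_1_iff n_not_Suc_n)
    then show "\<exists>k::nat. 0 < k \<and> n = 2 ^ k + 1" using k m by auto
  next
    assume "\<exists>k::nat. 0 < k \<and> n = 2 ^ k + 1"
    then show "\<exists>k. 2 * m = 2 ^ k" using m by auto
  qed
  finally show ?thesis .
qed

lemma card_orbit_funpow: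
  assumes pm: "permutation \<sigma>"
  shows "(\<sigma> ^^ card (orbit \<sigma> x)) x = x" "0 < card (orbit \<sigma> x)"
proof -
  have xo: "x \<in> orbit \<sigma> x" by (rule permutation_self_in_orbit[OF pm])
  have "card (orbit \<sigma> x) = funpow_dist1 \<sigma> x x"
    unfolding orbit_conv_funpow_dist1[OF xo] using card_image[OF inj_on_funpow_dist1[OF xo]] by simp
  then show "(\<sigma> ^^ card (orbit \<sigma> x)) x = x" using funpow_dist1_prop[OF xo] by simp
  show "0 < card (orbit \<sigma> x)" using \<open>card (orbit \<sigma> x) = _\<close> by simp
qed

lemma even_order_even_orbit:
  assumes p: "\<sigma> permutes {..<n}" and ev: "even (perm_order \<sigma>)"
  shows "\<exists>x<n. even (card (orbit \<sigma> x))"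
proof (rule ccontr)
  assume "\<not> (\<exists>x<n. even (card (orbit \<sigma> x)))"
  then have od: "\<forall>x<n. odd (card (orbit \<sigma> x))" by blast
  have pm: "permutation \<sigma>" using permutes_imp_permutation[OF _ p] by simp
  define L where "L = (\<Prod>x<n. card (orbit \<sigma> x))"
  have oL: "odd L" unfolding L_def using od by (simp add: even_prod_iff)
  then have L0: "0 < L" by (metis odd_pos)
  have fixL: "\<And>x. (\<sigma> ^^ L) x = x"
  proof -
    fix x show "(\<sigma> ^^ L) x = x"
    proof (cases "x < n")
      case True
      have "card (orbit \<sigma> x) dvd L" unfolding L_def using True by (intro dvd_prodI) auto
      then have "L mod card (orbit \<sigma> x) = 0" by simp
      then show ?thesis using funpow_mod_eq[where f=\<sigma> and n="card (orbit \<sigma> x)" and x=x and m=L] card_orbit_funpow[OF pm] by simp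
    next
      case False
      then have "\<sigma> x = x" using permutes_not_in[OF p] by simp
      then have "(\<sigma> ^^ 1) x = x" by simp
      then show ?thesis using funpow_mod_eq[where f=\<sigma> and n=1 and x=x and m=L] by simp
    qed
  qed
  then have Lid: "\<sigma> ^^ L = id" by auto
  define ord0 where "ord0 = perm_order \<sigma>"
  have o: "0 < ord0 \<and> \<sigma> ^^ ord0 = id"
    unfolding ord0_def perm_order_def by (rule LeastI[of _ L]) (use L0 Lid in auto)
  have "L mod ord0 = 0"
  proof (rule ccontr)
    assume ne: "L mod ord0 \<noteq> 0"
    have "\<And>x. (\<sigma> ^^ (L mod ord0)) x = x"
      using funpow_mod_eq[where f=\<sigma> and n=ord0 and m=L] o fixL by simp
    then have "\<sigma> ^^ (L mod ord0) = id" by auto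
    moreover have le: "\<And>k. 0 < k \<Longrightarrow> \<sigma> ^^ k = id \<Longrightarrow> ord0 \<le> k"
      unfolding ord0_def perm_order_def by (rule Least_le) simp
    ultimately have "ord0 \<le> L mod ord0" using ne by simp
    moreover have "L mod ord0 < ord0" using o by simp
    ultimately show False by simp
  qed
  then have "ord0 dvd L" by auto
  then have "odd ord0" using oL dvd_trans[of 2 ord0 L] by blast
  then show False using ev ord0_def by simp
qed

lemma AA_id:
  assumes "X \<subseteq> {..<n}" "X \<noteq> {}"
  shows "AA n id X = 2 ^ (card X - 1)"
  using assms
proof (induct "card X" arbitrary: X rule: less_induct)
  case less
  obtain x0 where x0: "x0 \<in> X" using less.prems by blast
  have oi: "orbit id x0 = {x0}" by (simp add: orbit_eq_singleton_iff)
  have finX: "finite X" using less.prems finite_subset by blast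
  note R = AD_rec(1)[OF permutes_id less.prems(1) _ x0, unfolded oi]
  show ?case
  proof (cases "X - {x0} = {}")
    case True
    then have "X = {x0}" using x0 by auto
    then show ?thesis using R by (simp add: AA_def)
  next
    case False
    have c: "card (X - {x0}) < card X" using x0 finX by (meson card_Diff1_less)
    have IH: "AA n id (X - {x0}) = 2 ^ (card (X - {x0}) - 1)"
      by (rule less.hyps[OF c]) (use less.prems False in auto)
    have cc: "card X = Suc (card (X - {x0}))" using card_Suc_Diff1[OF finX x0] by simp
    have "0 < card (X - {x0})" using False finX by (simp add: card_gt_0_iff)
    then show ?thesis using R IH False cc by (cases "card (X - {x0})") auto
  qed
qed

lemma DD_id:
  assumes "2 \<le> n"
  shows "DD n id {..<n} = 0"
proof -
  have oi: "orbit id 0 = {0}" by (simp add: orbit_eq_singleton_iff)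
  have "(1::nat) \<in> {..<n} - {0}" using assms by auto
  then have ne: "{..<n} - {0} \<noteq> {}" by blast
  have "0 \<in> {..<n}" using assms by auto
  have i2: "id ` {..<n} \<subseteq> {..<n}" by simp
  note R2 = AD_rec(2)[OF permutes_id subset_refl i2 \<open>0 \<in> {..<n}\<close>]
  show ?thesis using R2 ne unfolding oi by simp
qed

theorem proposition6p8:
  fixes n :: nat
  assumes "odd n"
  shows "(\<forall>\<sigma>. \<sigma> permutes {..<n} \<and> even (perm_order \<sigma>) \<longrightarrow>
            Gamma_e n \<sigma> = 0 \<and> Gamma_o n \<sigma> = 0)
         \<and> (steinberg_like2 n (Gamma_e n) \<longleftrightarrow> (\<exists>k::nat. 0 < k \<and> n = 2 ^ k + 1))"
proof -
  have partA: "\<forall>\<sigma>. \<sigma> permutes {..<n} \<and> even (perm_order \<sigma>) \<longrightarrow> Gamma_e n \<sigma> = 0 \<and> Gamma_o n \<sigma> = 0"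
  proof (intro allI impI)
    fix \<sigma> assume H: "\<sigma> permutes {..<n} \<and> even (perm_order \<sigma>)"
    then have p: "\<sigma> permutes {..<n}" by simp
    obtain x where x: "x < n" "even (card (orbit \<sigma> x))" using even_order_even_orbit H by blast
    have inv: "\<sigma> ` {..<n} \<subseteq> {..<n}" using permutes_image[OF p] by simp
    have xX: "x \<in> {..<n}" using x by simp
    note R1 = AD_rec(1)[OF p subset_refl inv xX] and R2 = AD_rec(2)[OF p subset_refl inv xX]
    have l0: "0 < card (orbit \<sigma> x)" using card_orbit_funpow(2) permutes_imp_permutation[OF _ p] by simp
    have sgn: "(-1::int) ^ (card (orbit \<sigma> x) - 1) = -1"
      using x(2) l0 by (simp add: minus_one_power_iff even_diff_nat)
    have ne: "{..<n} - orbit \<sigma> x \<noteq> {}"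
    proof
      assume "{..<n} - orbit \<sigma> x = {}"
      then have "orbit \<sigma> x = {..<n}" using orbit_facts(1)[OF p inv xX] by auto
      then show False using x(2) assms by simp
    qed
    have "AA n \<sigma> {..<n} = 0" using R1 sgn ne by simp
    moreover have "DD n \<sigma> {..<n} = 0" using R2 ne by simp
    ultimately show "Gamma_e n \<sigma> = 0 \<and> Gamma_o n \<sigma> = 0" using Gamma_AD[OF assms, of \<sigma>] by simp
  qed
  have "steinberg_like2 n (Gamma_e n) \<longleftrightarrow> Gamma_e n id = 2 ^ multiplicity (2::nat) (fact n)"
    unfolding steinberg_like2_def using partA by blast
  also have "\<dots> \<longleftrightarrow> (\<exists>k::nat. 0 < k \<and> n = 2 ^ k + 1)"
  proof (cases "n = 1")
    case True
    have "Gamma_e n id = 0" unfolding Gamma_e_def True by (rule sum.neutral) auto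
    moreover have "\<not> (\<exists>k::nat. 0 < k \<and> n = 2 ^ k + 1)" using True by auto
    ultimately show ?thesis by simp
  next
    case False
    have "n \<noteq> 0" using odd_pos[OF assms] by simp
    have "n \<noteq> 2" using assms by auto
    then have n3: "3 \<le> n" using \<open>n \<noteq> 0\<close> False by linarith
    have "2 * Gamma_e n id = 2 ^ (n - 1)"
    proof -
      have "0 \<in> {..<n}" using n3 by simp
      then have "{..<n} \<noteq> {}" by blast
      then show ?thesis using Gamma_AD(1)[OF assms, of id] AA_id[of "{..<n}" n] DD_id[of n] n3 by simp
    qed
    then have "Gamma_e n id = 2 ^ (n - 2)"
    proof -
      have "n - 1 = Suc (n - 2)" using n3 by simp
      then have "(2::int) ^ (n - 1) = 2 * 2 ^ (n - 2)" by simp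
      then show ?thesis using \<open>2 * Gamma_e n id = 2 ^ (n - 1)\<close> by simp
    qed
    then have "Gamma_e n id = 2 ^ multiplicity (2::nat) (fact n) \<longleftrightarrow> n - 2 = multiplicity (2::nat) (fact n)"
      by (simp add: power_inject_exp)
    then show ?thesis using v2_target[OF assms n3] by simp
  qed
  finally show ?thesis using partA by blast
qed

end
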